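(* Let $n\ge 2$, $0\le m\le n$ and $k$ generic, with the setup described in the context. Define the currents $R^+_0=Q_+$, $R^+_i=Q_++A_1+\dots+A_i$ ($i\ge 1$), $R^-_0=Q_-$, $R^-_i=Q_-+A_{-1}+\dots+A_{-i}$ ($i\ge1$). (These satisfy $R^\pm_i(z)R^\pm_i(w)\sim (z-w)^{-2}$, $R^\pm_i(z)R^\pm_j(w)\sim -(k+n-1)(z-w)^{-2}$ for $i\ne j$, $R^+_i(z)R^-_j(w)\sim (k+n-1)(z-w)^{-2}$, $R^\pm_i(z)Y(w)\sim \pm(z-w)^{-2}$, $Y(z)Y(w)\sim 0$.) Then the two fields $$\mathcal{E}_{n[m]}(z)=:\Big(\big((k+n-1)\partial+R^-_{m-1}\big)\cdots\big((k+n-1)\partial+R^-_1\big)R^-_0\Big)e^{\Xi}:(z),$$ $$\mathcal{F}_{n[m]}(z)=:\Big(\big((k+n-1)\partial+R^+_{n-m-1}\big)\cdots\big((k+n-1)\partial+R^+_1\big)R^+_0\Big)e^{-\Xi}:(z)$$ belong to $\mathcal{W}_{n[m]}(k)$, i.e. they commute with all screenings $E_i$ and $\Psi_\pm$ of the $n[m]$ realization; they are the two generating currents $\mathcal{E},\mathcal{F}$ of the algebra $\mathcal{W}^{(2)}_n(k)$ in the $n[m]$ realization. Here $\partial=\partial/\partial z$, the operator $((k+n-1)\partial+R)$ applied to a differential polynomial $P$ means $(k+n-1)\partial P+:RP:$, and derivatives act only inside the outer brackets (not on the exponential). For $m=1$ the first product reduces to $R^-_0$, for $m=0$ one has $\mathcal{E}_{n[0]}=e^{\Xi}$;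 for $m=n-1$ the second reduces to $R^+_0$, and for $m=n$, $\mathcal{F}_{n[n]}=e^{-\Xi}$.
   Context: Setup. Fix integers $n\ge 2$ and $0\le m\le n$, a generic complex number $k$ (in particular $k\neq -n$), and put $K=k+n$. Let $\varphi=(\varphi_1,\dots,\varphi_{n+1})$ be free scalar fields with OPE $\partial\varphi_i(z)\partial\varphi_j(w)\sim\delta_{ij}(z-w)^{-2}$, and let $(\,,\,)$ be the standard symmetric bilinear form on $\mathbb{C}^{n+1}$. Choose vectors $a_i$ ($1\le i\le n-m-1$), $a_{-i}$ ($1\le i\le m-1$), $\psi_+$ (present iff $m\le n-1$), $\psi_-$ (present iff $m\ge 1$), and $\xi$ in $\mathbb{C}^{n+1}$ whose nonzero pairwise products are: $(a_j,a_j)=2K$ for every $a_j$ present; $(a_i,a_{i+1})=-K$ for $1\le i\le n-m-2$; $(a_{-i},a_{-i-1})=-K$ for $1\le i\le m-2$; $(a_1,\psi_+)=-K$; $(a_{-1},\psi_-)=-K$; $(\psi_\pm,\psi_\pm)=1$; $(\psi_+,\psi_-)=K-1$; $(\psi_+,\xi)=1$; $(\psi_-,\xi)=-1$; all other products (including $(\xi,\xi)$ and $(a_j,\xi)$) vanish. (These $n+1$ vectors form a basis, unique up to orthogonal transformation.) Define currents $A_j=(a_j,\partial\varphi)$, $Q_\pm=(\psi_\pm,\partial\varphi)$, $Y=(\xi,\partial\varphi)$ and the field $\Xi=(\xi,\varphi)$, so $\partial e^{\Xi}=:Ye^{\Xi}:$. The screening operators are $E_j=\oint e^{(a_j,\varphi)}$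 for each $a_j$ present and $\Psi_\pm=\oint e^{(\psi_\pm,\varphi)}$ for each $\psi_\pm$ present. Let $\mathcal{V}_\xi$ be the space of fields $:P(\partial\varphi)e^{p\Xi}:$, $p\in\mathbb{Z}$, with $P$ a (normal-ordered) differential polynomial in the components of $\partial\varphi$. A field $X(w)$ commutes with a screening $\oint s(z)\,dz$ if the residue at $z=w$ of the OPE $s(z)X(w)$ vanishes. The vertex algebra $\mathcal{W}_{n[m]}(k)$ (the "$n[m]$ realization" of $\mathcal{W}^{(2)}_n(k)$) is the centralizer in $\mathcal{V}_\xi$ of all these screenings. When $m=0$ one writes $\psi=\psi_+$, $Q=Q_+$. All products of fields are normal ordered. *)

theory Defs
  imports "HOL-Complex_Analysis.Complex_Analysis"
begin

text \<open>A configuration of the free bosons is a tuple of entire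
functions phi i (components 0..n, i.e. C^(n+1)). A (normally ordered) differential
polynomial P in the components of d phi is modelled by the map sending phi and a point w
to the value P(d phi(w), d^2 phi(w), ...). Normally ordered products of such polynomials
are pointwise products, and the total derivative is the derivative in w.\<close>

type_synonym curve = "nat \<Rightarrow> complex \<Rightarrow> complex"
type_synonym dpoly = "curve \<Rightarrow> complex \<Rightarrow> complex"

definition bf :: "nat \<Rightarrow> (nat \<Rightarrow> complex) \<Rightarrow> (nat \<Rightarrow> complex) \<Rightarrow> complex" where
  "bf n u v = (\<Sum>i\<le>n. u i * v i)"

definition cur :: "nat \<Rightarrow> (nat \<Rightarrow> complex) \<Rightarrow> dpoly" where
  "cur n v = (\<lambda>\<phi> w. \<Sum>i\<le>n. v i * deriv (\<phi> i) w)"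

definition dop :: "complex \<Rightarrow> dpoly \<Rightarrow> dpoly \<Rightarrow> dpoly" where
  "dop c R P = (\<lambda>\<phi> w. c * deriv (\<lambda>\<zeta>. P \<phi> \<zeta>) w + R \<phi> w * P \<phi> w)"

fun chain :: "complex \<Rightarrow> (nat \<Rightarrow> dpoly) \<Rightarrow> nat \<Rightarrow> dpoly" where
  "chain c R 0 = (\<lambda>\<phi> w. 1)"
| "chain c R (Suc 0) = R 0"
| "chain c R (Suc (Suc j)) = dop c (R (Suc j)) (chain c R (Suc j))"

text \<open>Residue at z = w of the OPE  e^{(a,phi)}(z) :P(d phi) e^{p Xi}:(w), computed by Wick's
theorem, divided by the (nonvanishing) factor e^{(a + p xi, phi)(w)}:
  (z-w)^{(a,p xi)} e^{(a, phi(z) - phi(w))} P evaluated with every d^j phi_i(w) replaced by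
  d^j phi_i(w) + a_i d_w^j log(z-w) = d^j phi_i(w) - a_i (j-1)!/(z-w)^j.
The latter substitution is realised by evaluating P on the shifted configuration
  zeta |-> phi(zeta) + a log((z-zeta)/(z-w))  at zeta = w.\<close>
definition scr_res :: "nat \<Rightarrow> (nat \<Rightarrow> complex) \<Rightarrow> (nat \<Rightarrow> complex) \<Rightarrow> dpoly \<Rightarrow> int
    \<Rightarrow> curve \<Rightarrow> complex \<Rightarrow> complex" where
  "scr_res n a xi P p \<phi> w =
     residue (\<lambda>z. (z - w) powr (of_int p * bf n a xi)
                  * exp (\<Sum>i\<le>n. a i * (\<phi> i z - \<phi> i w))
                  * P (\<lambda>i \<zeta>. \<phi> i \<zeta> + a i * ln ((z - \<zeta>) / (z - w))) w) w"

text \<open>The field :P e^{p Xi}: (Xi = (xi,phi)) commutes with the screening oint e^{(a,phi)}: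
the residue field vanishes identically.\<close>
definition commutes :: "nat \<Rightarrow> (nat \<Rightarrow> complex) \<Rightarrow> (nat \<Rightarrow> complex) \<Rightarrow> dpoly \<Rightarrow> int \<Rightarrow> bool" where
  "commutes n a xi P p \<longleftrightarrow>
     (\<forall>\<phi>. (\<forall>i. \<phi> i holomorphic_on UNIV) \<longrightarrow> (\<forall>w. scr_res n a xi P p \<phi> w = 0))"

text \<open>Labels of the basis vectors: VA j is a_j (j > 0) or a_{-|j|} (j < 0); VPp = psi_+,
VPm = psi_-, VXi = xi.\<close>
datatype vlab = VA int | VPp | VPm | VXi

fun present :: "nat \<Rightarrow> nat \<Rightarrow> vlab \<Rightarrow> bool" where
  "present n m (VA j) \<longleftrightarrow> (1 \<le> j \<and> j \<le> int n - int m - 1) \<or> (1 \<le> -j \<and> -j \<le> int m - 1)"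
| "present n m VPp \<longleftrightarrow> m \<le> n - 1"
| "present n m VPm \<longleftrightarrow> 1 \<le> m"
| "present n m VXi \<longleftrightarrow> True"

fun vec :: "(nat \<Rightarrow> nat \<Rightarrow> complex) \<Rightarrow> (nat \<Rightarrow> nat \<Rightarrow> complex) \<Rightarrow> (nat \<Rightarrow> complex)
    \<Rightarrow> (nat \<Rightarrow> complex) \<Rightarrow> (nat \<Rightarrow> complex) \<Rightarrow> vlab \<Rightarrow> (nat \<Rightarrow> complex)" where
  "vec aP aM psiP psiM xi (VA j) = (if 0 < j then aP (nat j) else aM (nat (- j)))"
| "vec aP aM psiP psiM xi VPp = psiP"
| "vec aP aM psiP psiM xi VPm = psiM"
| "vec aP aM psiP psiM xi VXi = xi"

text \<open>Prescribed Gram matrix (K = k + n).\<close>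
fun gram :: "complex \<Rightarrow> vlab \<Rightarrow> vlab \<Rightarrow> complex" where
  "gram K (VA i) (VA j) =
     (if i = j then 2 * K
      else if ((0 < i \<and> 0 < j) \<or> (i < 0 \<and> j < 0)) \<and> \<bar>i - j\<bar> = 1 then - K else 0)"
| "gram K (VA i) VPp = (if i = 1 then - K else 0)"
| "gram K VPp (VA i) = (if i = 1 then - K else 0)"
| "gram K (VA i) VPm = (if i = -1 then - K else 0)"
| "gram K VPm (VA i) = (if i = -1 then - K else 0)"
| "gram K (VA i) VXi = 0"
| "gram K VXi (VA i) = 0"
| "gram K VPp VPp = 1"
| "gram K VPm VPm = 1"
| "gram K VPp VPm = K - 1"
| "gram K VPm VPp = K - 1"
| "gram K VPp VXi = 1"
| "gram K VXi VPp = 1"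
| "gram K VPm VXi = -1"
| "gram K VXi VPm = -1"
| "gram K VXi VXi = 0"

definition realization :: "nat \<Rightarrow> nat \<Rightarrow> complex \<Rightarrow> (nat \<Rightarrow> nat \<Rightarrow> complex) \<Rightarrow> (nat \<Rightarrow> nat \<Rightarrow> complex)
    \<Rightarrow> (nat \<Rightarrow> complex) \<Rightarrow> (nat \<Rightarrow> complex) \<Rightarrow> (nat \<Rightarrow> complex) \<Rightarrow> bool" where
  "realization n m K aP aM psiP psiM xi \<longleftrightarrow>
     (\<forall>l l'. present n m l \<and> present n m l' \<longrightarrow>
        bf n (vec aP aM psiP psiM xi l) (vec aP aM psiP psiM xi l') = gram K l l')"

definition Rvec :: "(nat \<Rightarrow> complex) \<Rightarrow> (nat \<Rightarrow> nat \<Rightarrow> complex) \<Rightarrow> nat \<Rightarrow> (nat \<Rightarrow> complex)" where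
  "Rvec psi a i = (\<lambda>c. psi c + (\<Sum>j\<in>{1..i}. a j c))"

end

theory Submission
  imports Defs
begin

type_synonym lp = "int \<Rightarrow> complex \<Rightarrow> complex"

definition lev :: "nat \<Rightarrow> lp \<Rightarrow> complex \<Rightarrow> complex \<Rightarrow> complex" where
  "lev N C z x = (\<Sum>k\<in>{-int N..int N}. C k x * (z - x) powi k)"

definition suppM :: "nat \<Rightarrow> lp \<Rightarrow> bool" where
  "suppM M C \<longleftrightarrow> (\<forall>k. int M < \<bar>k\<bar> \<longrightarrow> C k = (\<lambda>_. 0))"

definition holoC :: "lp \<Rightarrow> bool" where
  "holoC C \<longleftrightarrow> (\<forall>k. C k holomorphic_on UNIV)"

definition lD :: "lp \<Rightarrow> lp" where
  "lD C k = (\<lambda>x. deriv (C k) x - of_int (k+1) * C (k+1) x)"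

definition lstep :: "complex \<Rightarrow> (complex \<Rightarrow> complex) \<Rightarrow> complex \<Rightarrow> lp \<Rightarrow> lp" where
  "lstep c F e C k = (\<lambda>x. c * lD C k x + F x * C k x + e * C (k+1) x)"

definition resF :: "nat \<Rightarrow> (complex \<Rightarrow> complex) \<Rightarrow> lp \<Rightarrow> complex \<Rightarrow> complex" where
  "resF N v C x = (\<Sum>j<N. C (-(int j+1)) x * (deriv ^^ j) v x / fact j)"

lemma sum_int_shift:
  "(\<Sum>k\<in>{a..b::int}. f (k+1)) = (\<Sum>k\<in>{a+1..b+1}. f k)"
  by (rule sum.reindex_bij_witness[of _ "\<lambda>k. k - 1" "\<lambda>k. k + 1"]) auto

lemma lev_shift:
  assumes "suppM M C" "M < N" "z \<noteq> x"
  shows "lev N (\<lambda>k. C (k+1)) z x = lev N C z x / (z - x)"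
proof -
  have "lev N (\<lambda>k. C (k+1)) z x = (\<Sum>k\<in>{-int N..int N}. C (k+1) x * (z - x) powi (k+1) / (z-x))"
    unfolding lev_def using assms(3)
    by (intro sum.cong refl) (simp add: power_int_add field_simps)
  also have "\<dots> = (\<Sum>k\<in>{-int N+1..int N+1}. C k x * (z - x) powi k / (z-x))"
    by (rule sum_int_shift)
  also have "\<dots> = (\<Sum>k\<in>{-int N..int N}. C k x * (z - x) powi k / (z-x))"
  proof -
    have z1: "C (int N + 1) = (\<lambda>_. 0)" "C (- int N) = (\<lambda>_. 0)"
      using assms(1,2) unfolding suppM_def by auto
    have "(\<Sum>k\<in>{-int N+1..int N+1}. C k x * (z - x) powi k / (z-x))
        = (\<Sum>k\<in>{-int N..int N+1}. C k x * (z - x) powi k / (z-x))"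
    proof (rule sum.mono_neutral_left)
      show "\<forall>i\<in>{- int N..int N + 1} - {- int N + 1..int N + 1}. C i x * (z - x) powi i / (z - x) = 0"
      proof
        fix i assume "i \<in> {- int N..int N + 1} - {- int N + 1..int N + 1}"
        then have "i = - int N" by auto
        then show "C i x * (z - x) powi i / (z - x) = 0" using z1 by simp
      qed
    qed auto
    also have "\<dots> = (\<Sum>k\<in>{-int N..int N}. C k x * (z - x) powi k / (z-x))"
    proof (rule sum.mono_neutral_right)
      show "\<forall>i\<in>{- int N..int N + 1} - {- int N..int N}. C i x * (z - x) powi i / (z - x) = 0"
      proof
        fix i assume "i \<in> {- int N..int N + 1} - {- int N..int N}"
        then have "i = int N + 1" by auto
        then show "C i x * (z - x) powi i / (z - x) = 0" using z1 by simp
      qed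
    qed auto
    finally show ?thesis .
  qed
  also have "\<dots> = lev N C z x / (z - x)"
    unfolding lev_def by (simp add: sum_divide_distrib)
  finally show ?thesis .
qed


lemma supp_sum_shift:
  assumes "suppM M C" "M < N"
  shows "(\<Sum>k\<in>{-int N..int N}. C (k+1) x * h (k+1)) = (\<Sum>k\<in>{-int N..int N}. C k x * h k)"
proof -
  have z1: "C (int N + 1) = (\<lambda>_. 0)" "C (- int N) = (\<lambda>_. 0)"
    using assms(1,2) unfolding suppM_def by auto
  have "(\<Sum>k\<in>{-int N..int N}. C (k+1) x * h (k+1)) = (\<Sum>k\<in>{-int N+1..int N+1}. C k x * h k)"
    by (rule sum_int_shift)
  also have "\<dots> = (\<Sum>k\<in>{-int N..int N+1}. C k x * h k)"
  proof (rule sum.mono_neutral_left)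
    show "\<forall>i\<in>{- int N..int N + 1} - {- int N + 1..int N + 1}. C i x * h i = 0"
    proof
      fix i assume "i \<in> {- int N..int N + 1} - {- int N + 1..int N + 1}"
      then have "i = - int N" by auto
      then show "C i x * h i = 0" using z1 by simp
    qed
  qed auto
  also have "\<dots> = (\<Sum>k\<in>{-int N..int N}. C k x * h k)"
  proof (rule sum.mono_neutral_right)
    show "\<forall>i\<in>{- int N..int N + 1} - {- int N..int N}. C i x * h i = 0"
    proof
      fix i assume "i \<in> {- int N..int N + 1} - {- int N..int N}"
      then have "i = int N + 1" by auto
      then show "C i x * h i = 0" using z1 by simp
    qed
  qed auto
  finally show ?thesis .
qed

lemma lev_deriv:
  assumes "suppM M C" "M < N" "holoC C" "z \<noteq> x"
  shows "((\<lambda>y. lev N C z y) has_field_derivative lev N (lD C) z x) (at x)"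
proof -
  have d: "((\<lambda>y. C k y * (z - y) powi k) has_field_derivative
      deriv (C k) x * (z - x) powi k - of_int k * C k x * (z - x) powi (k - 1)) (at x)" for k
  proof -
    have "(C k has_field_derivative deriv (C k) x) (at x)"
      using assms(3) unfolding holoC_def by (intro holomorphic_derivI[of _ UNIV]) auto
    moreover have "((\<lambda>y. (z - y) powi k) has_field_derivative of_int k * (z - x) powi (k - 1) * (-1)) (at x)"
      using assms(4) by (intro DERIV_power_int derivative_eq_intros) auto
    ultimately show ?thesis
      by (auto intro!: derivative_eq_intros elim!: DERIV_cong simp: algebra_simps)
  qed
  have "((\<lambda>y. lev N C z y) has_field_derivative
      (\<Sum>k\<in>{-int N..int N}. deriv (C k) x * (z - x) powi k - of_int k * C k x * (z - x) powi (k - 1))) (at x)"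
    unfolding lev_def by (rule DERIV_sum) (use d in auto)
  also have "(\<Sum>k\<in>{-int N..int N}. deriv (C k) x * (z - x) powi k - of_int k * C k x * (z - x) powi (k - 1))
     = (\<Sum>k\<in>{-int N..int N}. deriv (C k) x * (z - x) powi k) - (\<Sum>k\<in>{-int N..int N}. C k x * (of_int k * (z - x) powi (k - 1)))"
    by (simp add: sum_subtractf algebra_simps)
  also have "(\<Sum>k\<in>{-int N..int N}. C k x * (of_int k * (z - x) powi (k - 1)))
     = (\<Sum>k\<in>{-int N..int N}. C (k+1) x * (of_int (k+1) * (z - x) powi (k + 1 - 1)))"
    using supp_sum_shift[OF assms(1,2), of x "\<lambda>k. of_int k * (z - x) powi (k - 1)"] by simp
  also have "(\<Sum>k\<in>{-int N..int N}. deriv (C k) x * (z - x) powi k) - \<dots> = lev N (lD C) z x"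
    unfolding lev_def lD_def by (simp add: sum_subtractf algebra_simps)
  finally show ?thesis .
qed


lemma higher_deriv_DERIV:
  assumes "v holomorphic_on UNIV"
  shows "((deriv ^^ j) v has_field_derivative (deriv ^^ Suc j) v x) (at x)"
proof -
  have "(deriv ^^ j) v holomorphic_on UNIV"
    using assms by (intro holomorphic_higher_deriv) auto
  then have "((deriv ^^ j) v has_field_derivative deriv ((deriv ^^ j) v) x) (at x)"
    by (intro holomorphic_derivI[of _ UNIV]) auto
  then show ?thesis by simp
qed

lemma resF_deriv:
  assumes "suppM M C" "M < N" "holoC C" "v holomorphic_on UNIV"
  shows "((\<lambda>y. resF N v C y) has_field_derivative resF N v (lD C) x) (at x)"
proof -
  obtain N' where N': "N = Suc N'" using assms(2) by (cases N) auto
  have z: "C (- int N) = (\<lambda>_. 0)" using assms(1,2) unfolding suppM_def by auto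
  have d: "((\<lambda>y. C (-(int j+1)) y * (deriv ^^ j) v y / fact j) has_field_derivative
      (deriv (C (-(int j+1))) x * (deriv ^^ j) v x + C (-(int j+1)) x * (deriv ^^ Suc j) v x) / fact j) (at x)" for j
  proof -
    have "(C (-(int j+1)) has_field_derivative deriv (C (-(int j+1))) x) (at x)"
      using assms(3) unfolding holoC_def by (intro holomorphic_derivI[of _ UNIV]) auto
    then show ?thesis using higher_deriv_DERIV[OF assms(4), of j x]
      by (auto intro!: derivative_eq_intros elim!: DERIV_cong simp: algebra_simps add_divide_distrib)
  qed
  have "((\<lambda>y. resF N v C y) has_field_derivative
     (\<Sum>j<N. (deriv (C (-(int j+1))) x * (deriv ^^ j) v x + C (-(int j+1)) x * (deriv ^^ Suc j) v x) / fact j)) (at x)"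
    unfolding resF_def by (rule DERIV_sum) (use d in auto)
  also have "(\<Sum>j<N. (deriv (C (-(int j+1))) x * (deriv ^^ j) v x + C (-(int j+1)) x * (deriv ^^ Suc j) v x) / fact j)
    = (\<Sum>j<N. deriv (C (-(int j+1))) x * (deriv ^^ j) v x / fact j) + (\<Sum>j<N. C (-(int j+1)) x * (deriv ^^ Suc j) v x / fact j)"
    by (simp add: sum.distrib add_divide_distrib)
  also have "(\<Sum>j<N. C (-(int j+1)) x * (deriv ^^ Suc j) v x / fact j)
     = (\<Sum>j<N'. C (-(int j+1)) x * (deriv ^^ Suc j) v x / fact j)"
    using z by (simp add: N' algebra_simps)
  also have "\<dots> = (\<Sum>j<N. of_nat j * C (- int j) x * (deriv ^^ j) v x / fact j)"
  proof -
    have gen: "of_nat (Suc j) * Y / fact (Suc j) = (Y::complex) / fact j" for j Y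
    proof -
      have "(fact (Suc j) :: complex) = of_nat (Suc j) * fact j" by (simp only: fact_Suc of_nat_mult)
      moreover have "(of_nat (Suc j) :: complex) \<noteq> 0" by (simp only: of_nat_eq_0_iff)
      ultimately show ?thesis by (metis mult_divide_mult_cancel_left)
    qed
    have h: "of_nat (Suc j) * C (- int (Suc j)) x * (deriv ^^ Suc j) v x / fact (Suc j)
        = C (-(int j+1)) x * (deriv ^^ Suc j) v x / fact j" for j
    proof -
      have e: "- int (Suc j) = -(int j+1)" by simp
      have "of_nat (Suc j) * (C (- int (Suc j)) x * (deriv ^^ Suc j) v x) / fact (Suc j) = C (- int (Suc j)) x * (deriv ^^ Suc j) v x / fact j"
        by (rule gen)
      then show ?thesis by (simp only: e mult.assoc)
    qed
    show ?thesis unfolding N' sum.lessThan_Suc_shift h by simp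
  qed
  also have "(\<Sum>j<N. deriv (C (-(int j+1))) x * (deriv ^^ j) v x / fact j) + \<dots> = resF N v (lD C) x"
    unfolding resF_def lD_def by (simp add: sum.distrib[symmetric] algebra_simps add_divide_distrib)
  finally show ?thesis .
qed


lemma suppM_lstep:
  assumes "suppM M C" shows "suppM (Suc M) (lstep c F e C)"
  unfolding suppM_def
proof (intro allI impI)
  fix k :: int assume k: "int (Suc M) < \<bar>k\<bar>"
  then have "int M < \<bar>k\<bar>" "int M < \<bar>k+1\<bar>" by auto
  then have "C k = (\<lambda>_. 0)" "C (k+1) = (\<lambda>_. 0)" using assms unfolding suppM_def by auto
  then show "lstep c F e C k = (\<lambda>_. 0)" unfolding lstep_def lD_def by simp
qed

lemma holoC_lstep:
  assumes "holoC C" "F holomorphic_on UNIV"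
  shows "holoC (lstep c F e C)"
  using assms unfolding holoC_def lstep_def lD_def
  by (auto intro!: holomorphic_intros)

lemma lev_lstep:
  assumes "suppM M C" "M < N" "z \<noteq> x"
  shows "lev N (lstep c F e C) z x = c * lev N (lD C) z x + F x * lev N C z x + e * (lev N C z x / (z - x))"
proof -
  have "lev N (lstep c F e C) z x = c * lev N (lD C) z x + F x * lev N C z x + e * lev N (\<lambda>k. C (k+1)) z x"
    unfolding lev_def lstep_def by (simp add: sum.distrib sum_distrib_left algebra_simps)
  then show ?thesis using lev_shift[OF assms] by simp
qed

lemma resF_lstep:
  "resF N v (lstep c F e C) x = c * resF N v (lD C) x + F x * resF N v C x + e * resF N v (\<lambda>k. C (k+1)) x"
  unfolding resF_def lstep_def by (simp add: sum.distrib sum_distrib_left algebra_simps add_divide_distrib)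

lemma resF_zero_step:
  assumes "suppM M C" "M < N" "holoC C" "v holomorphic_on UNIV" "\<forall>x. resF N v C x = 0"
  shows "resF N v (lstep c F 0 C) x = 0"
proof -
  have "((\<lambda>y. resF N v C y) has_field_derivative resF N v (lD C) x) (at x)"
    by (rule resF_deriv[OF assms(1-4)])
  moreover have "((\<lambda>y. resF N v C y) has_field_derivative 0) (at x)"
    using assms(5) by simp
  ultimately have "resF N v (lD C) x = 0" using DERIV_unique by blast
  then show ?thesis using assms(5) by (simp add: resF_lstep)
qed

definition nonneg :: "lp \<Rightarrow> bool" where "nonneg C \<longleftrightarrow> (\<forall>k<0. C k = (\<lambda>_. 0))"
definition pure0 :: "lp \<Rightarrow> bool" where "pure0 C \<longleftrightarrow> (\<forall>k. k \<noteq> 0 \<longrightarrow> C k = (\<lambda>_. 0))"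

lemma nonneg_lstep:
  assumes "nonneg C" shows "nonneg (lstep c F 0 C)"
  unfolding nonneg_def
proof (intro allI impI)
  fix k :: int assume k: "k < 0"
  then have h1: "C k = (\<lambda>_. 0)" using assms unfolding nonneg_def by auto
  have h2: "of_int (k+1) * C (k+1) x = 0" for x
  proof (cases "k + 1 = 0")
    case False then have "k+1 < 0" using k by simp
    then show ?thesis using assms unfolding nonneg_def by auto
  qed simp
  show "lstep c F 0 C k = (\<lambda>_. 0)" unfolding lstep_def lD_def h1 deriv_const h2 by simp
qed

lemma pure0_lstep:
  assumes "pure0 C" shows "pure0 (lstep c F 0 C)"
  unfolding pure0_def
proof (intro allI impI)
  fix k :: int assume k: "k \<noteq> 0"
  then have h1: "C k = (\<lambda>_. 0)" using assms unfolding pure0_def by auto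
  have h2: "of_int (k+1) * C (k+1) x = 0" for x
  proof (cases "k + 1 = 0")
    case False
    then show ?thesis using assms unfolding pure0_def by auto
  qed simp
  show "lstep c F 0 C k = (\<lambda>_. 0)" unfolding lstep_def lD_def h1 deriv_const h2 by simp
qed

lemma resF_nonneg: "nonneg C \<Longrightarrow> resF N v C x = 0"
  unfolding nonneg_def resF_def by simp

primrec Cs :: "complex \<Rightarrow> (nat \<Rightarrow> complex \<Rightarrow> complex) \<Rightarrow> (nat \<Rightarrow> complex) \<Rightarrow> int \<Rightarrow> (complex \<Rightarrow> complex) \<Rightarrow> nat \<Rightarrow> lp" where
  "Cs c Fs es g u 0 = (\<lambda>k. if k = g then u else (\<lambda>_. 0))"
| "Cs c Fs es g u (Suc i) = lstep c (Fs i) (es i) (Cs c Fs es g u i)"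

lemma Cs_supp: "\<bar>g\<bar> \<le> 1 \<Longrightarrow> suppM (Suc i) (Cs c Fs es g u i)"
proof (induction i)
  case 0 then show ?case unfolding suppM_def by auto
next
  case (Suc i) then show ?case by (simp add: suppM_lstep)
qed

lemma Cs_holo: "u holomorphic_on UNIV \<Longrightarrow> (\<forall>i. Fs i holomorphic_on UNIV) \<Longrightarrow> holoC (Cs c Fs es g u i)"
proof (induction i)
  case 0 then show ?case unfolding holoC_def by (auto intro: holomorphic_intros)
next
  case (Suc i) then show ?case by (simp add: holoC_lstep)
qed

lemma Cs_nonneg: "0 \<le> g \<Longrightarrow> (\<forall>i<L. es i = 0) \<Longrightarrow> i \<le> L \<Longrightarrow> nonneg (Cs c Fs es g u i)"
proof (induction i)
  case 0 then show ?case unfolding nonneg_def by auto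
next
  case (Suc i) then show ?case using nonneg_lstep[of "Cs c Fs es g u i" c "Fs i"] by simp
qed

lemma Cs_pure0: "(\<forall>i<j. es i = 0) \<Longrightarrow> i \<le> j \<Longrightarrow> pure0 (Cs c Fs es 0 u i)"
proof (induction i)
  case 0 then show ?case unfolding pure0_def by auto
next
  case (Suc i) then show ?case using pure0_lstep[of "Cs c Fs es 0 u i" c "Fs i"] by simp
qed

lemma Cs_zero_prop:
  assumes "\<bar>g\<bar> \<le> 1" "u holomorphic_on UNIV" "\<forall>i. Fs i holomorphic_on UNIV" "v holomorphic_on UNIV"
    "\<forall>i. jz \<le> i \<and> i < L \<longrightarrow> es i = 0" "L < N"
    "\<forall>x. resF N v (Cs c Fs es g u jz) x = 0" "jz \<le> i" "i \<le> L"
  shows "\<forall>x. resF N v (Cs c Fs es g u i) x = 0"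
  using assms(8,9)
proof (induction i)
  case 0 then show ?case using assms(7) by simp
next
  case (Suc i)
  show ?case
  proof (cases "jz = Suc i")
    case True then show ?thesis using assms(7) by simp
  next
    case False
    then have "jz \<le> i" using Suc by simp
    then have IH: "\<forall>x. resF N v (Cs c Fs es g u i) x = 0" using Suc by simp
    have "es i = 0" using assms(5) \<open>jz \<le> i\<close> Suc by simp
    then show ?thesis
      using resF_zero_step[OF Cs_supp[OF assms(1), of i] _ Cs_holo[OF assms(2,3)] assms(4) IH] Suc assms(6)
      by simp
  qed
qed


lemma resF_two:
  assumes "\<forall>k\<le>-3. C k = (\<lambda>_. 0)" "2 \<le> N"
  shows "resF N v C x = C (-1) x * v x + C (-2) x * deriv v x"
proof -
  have "resF N v C x = (\<Sum>j<2. C (-(int j+1)) x * (deriv ^^ j) v x / fact j)"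
    unfolding resF_def
  proof (rule sum.mono_neutral_right)
    show "\<forall>i\<in>{..<N} - {..<2}. C (- (int i + 1)) x * (deriv ^^ i) v x / fact i = 0"
    proof
      fix i assume "i \<in> {..<N} - {..<2}"
      then have "-(int i + 1) \<le> -3" by auto
      then show "C (- (int i + 1)) x * (deriv ^^ i) v x / fact i = 0" using assms(1) by simp
    qed
  qed (use assms in auto)
  also have "\<dots> = C (-1) x * v x + C (-2) x * deriv v x"
    by (simp add: numeral_2_eq_2)
  finally show ?thesis .
qed

lemma resF_T2:
  assumes "u holomorphic_on UNIV" "v holomorphic_on UNIV" "\<forall>i. Fs i holomorphic_on UNIV"
    "\<forall>x. deriv u x = - A x * u x" "\<forall>x. deriv v x = A x * v x"
    "Fs 0 = (\<lambda>x. c * A x + A x)" "es 0 = -(c+1)" "\<forall>i. 1 \<le> i \<and> i < L \<longrightarrow> es i = 0"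
    "1 \<le> L" "L < N"
  shows "resF N v (Cs c Fs es (-1) u L) x = 0"
proof -
  let ?C1 = "Cs c Fs es (-1) u 1"
  have c1: "?C1 (-1) x = A x * u x" for x
    using assms(4,6) by (simp add: lstep_def lD_def algebra_simps)
  have c2: "?C1 (-2) x = - u x" for x
    by (simp add: lstep_def lD_def assms(7) algebra_simps)
  have c3: "\<forall>k\<le>-3. ?C1 k = (\<lambda>_. 0)"
    by (auto simp: lstep_def lD_def fun_eq_iff)
  have base: "\<forall>x. resF N v ?C1 x = 0"
    using resF_two[OF c3, of N v] assms(5,10,9) c1 c2 by (simp add: algebra_simps)
  show ?thesis
  proof -
    have "\<forall>x. resF N v (Cs c Fs es (-1) u L) x = 0"
      by (rule Cs_zero_prop[where jz=1]) (use assms base in auto)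
    then show ?thesis by simp
  qed
qed


lemma resF_T3:
  assumes "u holomorphic_on UNIV" "v holomorphic_on UNIV" "\<forall>i. Fs i holomorphic_on UNIV"
    "\<forall>x. deriv v x = A x * v x" "\<forall>x. Fs (Suc jm) x - Fs jm x = A x"
    "Suc jm < L" "L < N"
    "es jm = c+1" "es (Suc jm) = -(c+1)" "\<forall>i. i < L \<and> i \<noteq> jm \<and> i \<noteq> Suc jm \<longrightarrow> es i = 0"
  shows "resF N v (Cs c Fs es 0 u L) x = 0"
proof -
  define P where "P = Cs c Fs es 0 u jm"
  define C1 where "C1 = Cs c Fs es 0 u (Suc jm)"
  define C2 where "C2 = Cs c Fs es 0 u (Suc (Suc jm))"
  have C1eq: "C1 = lstep c (Fs jm) (c+1) P" unfolding C1_def P_def using assms(8) by simp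
  have C2eq: "C2 = lstep c (Fs (Suc jm)) (-(c+1)) C1" unfolding C2_def C1_def using assms(9) by simp
  have pure: "pure0 P" unfolding P_def by (rule Cs_pure0[where j=jm]) (use assms(10,6) in auto)
  have hol: "holoC P" unfolding P_def by (rule Cs_holo) (use assms in auto)
  then have holP: "P 0 holomorphic_on UNIV" unfolding holoC_def by auto
  then have dP: "P 0 field_differentiable at x" for x
    by (meson UNIV_I holomorphic_on_imp_differentiable_at open_UNIV)
  have Pz: "P k = (\<lambda>_. 0)" if "k \<noteq> 0" for k using pure that unfolding pure0_def by auto
  have c1m: "C1 (-1) = (\<lambda>x. (c+1) * P 0 x)"
    unfolding C1eq by (simp add: lstep_def lD_def fun_eq_iff Pz)
  have c10: "C1 0 x = c * deriv (P 0) x + Fs jm x * P 0 x" for x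
    unfolding C1eq by (simp add: lstep_def lD_def Pz)
  have c1l: "C1 k = (\<lambda>_. 0)" if "k \<le> -2" for k
    unfolding C1eq using that by (simp add: lstep_def lD_def fun_eq_iff Pz)
  have c2m1: "C2 (-1) x = (c+1) * A x * P 0 x" for x
  proof -
    have "C2 (-1) x = c * deriv (C1 (-1)) x + Fs (Suc jm) x * C1 (-1) x - (c+1) * C1 0 x"
      unfolding C2eq by (simp add: lstep_def lD_def algebra_simps)
    also have "deriv (C1 (-1)) x = (c+1) * deriv (P 0) x"
      unfolding c1m by (rule deriv_cmult[OF dP])
    finally have "C2 (-1) x = c * ((c + 1) * deriv (P 0) x) + Fs (Suc jm) x * C1 (- 1) x - (c + 1) * C1 0 x" .
    moreover have "Fs (Suc jm) x = A x + Fs jm x" using assms(5) by (metis diff_add_cancel)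
    ultimately show ?thesis using c1m c10[of x] by (simp add: algebra_simps)
  qed
  have c2m2: "C2 (-2) x = - (c+1) * P 0 x" for x
  proof -
    have "C2 (-2) x = c * (deriv (C1 (-2)) x + C1 (-1) x) + Fs (Suc jm) x * C1 (-2) x - (c+1) * C1 (-1) x"
      unfolding C2eq by (simp add: lstep_def lD_def algebra_simps)
    then show ?thesis using c1m c1l[of "-2"] by (simp add: algebra_simps)
  qed
  have c2l: "\<forall>k\<le>-3. C2 k = (\<lambda>_. 0)"
  proof (intro allI impI)
    fix k :: int assume "k \<le> -3"
    then have "C1 k = (\<lambda>_. 0)" "C1 (k+1) = (\<lambda>_. 0)" using c1l by auto
    then show "C2 k = (\<lambda>_. 0)" unfolding C2eq lstep_def lD_def by simp
  qed
  have base: "\<forall>x. resF N v (Cs c Fs es 0 u (Suc (Suc jm))) x = 0"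
  proof
    fix x
    have "2 \<le> N" using assms(6,7) by simp
    then have "resF N v C2 x = C2 (-1) x * v x + C2 (-2) x * deriv v x"
      by (rule resF_two[OF c2l])
    also have "\<dots> = 0" unfolding c2m1 c2m2 using assms(4) by (simp add: algebra_simps)
    finally show "resF N v (Cs c Fs es 0 u (Suc (Suc jm))) x = 0" unfolding C2_def .
  qed
  have "\<forall>x. resF N v (Cs c Fs es 0 u L) x = 0"
    by (rule Cs_zero_prop[where jz="Suc (Suc jm)"]) (use assms base in auto)
  then show ?thesis by simp
qed


primrec ch :: "complex \<Rightarrow> (nat \<Rightarrow> dpoly) \<Rightarrow> nat \<Rightarrow> dpoly" where
  "ch c R 0 = (\<lambda>\<phi> w. 1)"
| "ch c R (Suc i) = dop c (R i) (ch c R i)"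

lemma chain_ch: "chain c R L = ch c R L"
proof (induction c R L rule: chain.induct)
  case (1 c R) then show ?case by simp
next
  case (2 c R) then show ?case by (simp add: dop_def fun_eq_iff)
next
  case (3 c R j) then show ?case by simp
qed

definition sh :: "(nat \<Rightarrow> complex) \<Rightarrow> curve \<Rightarrow> complex \<Rightarrow> complex \<Rightarrow> curve" where
  "sh a \<phi> z w = (\<lambda>i \<zeta>. \<phi> i \<zeta> + a i * ln ((z - \<zeta>) / (z - w)))"

lemma ball_ne: "\<zeta> \<in> ball w (cmod (z - w)) \<Longrightarrow> z \<noteq> \<zeta>"
  by (auto simp: dist_norm norm_minus_commute)

lemma sh_deriv:
  assumes "\<phi> i holomorphic_on UNIV" "\<zeta> \<in> ball w (cmod (z - w))"
  shows "(sh a \<phi> z w i has_field_derivative (deriv (\<phi> i) \<zeta> - a i / (z - \<zeta>))) (at \<zeta>)"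
proof -
  have zw: "z \<noteq> w" using assms(2) by auto
  have z\<zeta>: "z \<noteq> \<zeta>" using ball_ne[OF assms(2)] .
  define q where "q = (z - \<zeta>) / (z - w)"
  have "q - 1 = (w - \<zeta>) / (z - w)" unfolding q_def using zw by (simp add: field_simps)
  then have "cmod (q - 1) < 1" using assms(2) zw
    by (simp add: norm_divide dist_norm divide_less_eq norm_minus_commute)
  then have "Re q > 0"
    using abs_Re_le_cmod[of "q - 1"] by auto
  then have qn: "q \<notin> \<real>\<^sub>\<le>\<^sub>0" by (auto simp: complex_nonpos_Reals_iff)
  have d1: "(\<phi> i has_field_derivative deriv (\<phi> i) \<zeta>) (at \<zeta>)"
    using assms(1) by (intro holomorphic_derivI[of _ UNIV]) auto
  have d2: "((\<lambda>x. ln ((z - x) / (z - w))) has_field_derivative inverse q * (-1 / (z - w))) (at \<zeta>)"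
  proof (rule DERIV_chain2[of Ln])
    show "(Ln has_field_derivative inverse q) (at ((z - \<zeta>) / (z - w)))"
      using has_field_derivative_Ln[OF qn] unfolding q_def .
    have "((\<lambda>x. z - x) has_field_derivative 0 - 1) (at \<zeta>)"
      by (rule DERIV_diff[OF DERIV_const DERIV_ident])
    then show "((\<lambda>x. (z - x) / (z - w)) has_field_derivative - 1 / (z - w)) (at \<zeta>)"
      using DERIV_cdivide by fastforce
  qed
  have e: "inverse q * (-1 / (z - w)) = - 1 / (z - \<zeta>)"
    unfolding q_def using zw z\<zeta> by (simp add: field_simps)
  show ?thesis unfolding sh_def
    by (rule DERIV_cong[OF DERIV_add[OF d1 DERIV_cmult[OF d2, of "a i"]]]) (metis e diff_conv_add_uminus minus_divide_left mult.right_neutral mult_minus_right times_divide_eq_right)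
qed

lemma cur_sh:
  assumes "\<forall>i. \<phi> i holomorphic_on UNIV" "\<zeta> \<in> ball w (cmod (z - w))"
  shows "cur n v (sh a \<phi> z w) \<zeta> = cur n v \<phi> \<zeta> - bf n v a / (z - \<zeta>)"
proof -
  have h: "deriv (sh a \<phi> z w i) \<zeta> = deriv (\<phi> i) \<zeta> - a i / (z - \<zeta>)" for i
    using sh_deriv[OF _ assms(2)] assms(1) by (simp add: DERIV_imp_deriv)
  have "cur n v (sh a \<phi> z w) \<zeta> = (\<Sum>i\<le>n. v i * deriv (\<phi> i) \<zeta> - v i * a i / (z - \<zeta>))"
    unfolding cur_def h by (intro sum.cong refl) (simp add: algebra_simps)
  also have "\<dots> = cur n v \<phi> \<zeta> - bf n v a / (z - \<zeta>)"
    unfolding cur_def bf_def by (simp add: sum_subtractf sum_divide_distrib)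
  finally show ?thesis .
qed


lemma cur_holo: "\<forall>i. \<phi> i holomorphic_on UNIV \<Longrightarrow> cur n v \<phi> holomorphic_on UNIV"
  unfolding cur_def by (intro holomorphic_intros holomorphic_deriv) auto

lemma expsum_deriv:
  assumes "\<forall>i. \<phi> i holomorphic_on UNIV"
  shows "((\<lambda>x. \<Sum>j\<le>n. a j * \<phi> j x) has_field_derivative cur n a \<phi> x) (at x)"
  unfolding cur_def
proof (rule DERIV_sum, rule DERIV_cmult)
  fix j show "(\<phi> j has_field_derivative deriv (\<phi> j) x) (at x)"
    using assms by (intro holomorphic_derivI[of _ UNIV]) auto
qed

lemma alg_step:
  fixes W d c L' L A g Ri b :: complex
  assumes "W \<noteq> 0" "d \<noteq> 0"
  shows "W * (c * ((L' * W - L * (- (A + g / d) * W)) / (W * W)) + (Ri - b / d) * (L / W))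
       = c * L' + (c * A + Ri) * L + (c * g - b) * (L / d)"
proof -
  have "(L' * W - L * (- (A + g / d) * W)) / (W * W) = (L' + L * (A + g / d)) / W"
    using assms(1) by (simp add: field_simps)
  then have "W * (c * ((L' * W - L * (- (A + g / d) * W)) / (W * W)) + (Ri - b / d) * (L / W))
      = c * (L' + L * (A + g / d)) + (Ri - b / d) * L"
    using assms(1) by (simp add: field_simps)
  also have "\<dots> = c * L' + (c * A + Ri) * L + (c * g - b) * (L / d)"
    using assms(2) by (simp add: field_simps)
  finally show ?thesis .
qed

lemma ch_sh:
  fixes n :: nat and a :: "nat \<Rightarrow> complex" and r :: "nat \<Rightarrow> nat \<Rightarrow> complex" and c :: complex and g :: int
  assumes hol: "\<forall>i. \<phi> i holomorphic_on UNIV" and g: "\<bar>g\<bar> \<le> 1" and iN: "Suc i < N"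
    and u_def: "u = (\<lambda>\<zeta>. exp (- (\<Sum>j\<le>n. a j * \<phi> j \<zeta>)))"
    and Fs_def: "Fs = (\<lambda>i \<zeta>. c * cur n a \<phi> \<zeta> + cur n (r i) \<phi> \<zeta>)"
    and es_def: "es = (\<lambda>i. c * of_int g - bf n (r i) a)"
    and \<zeta>: "\<zeta> \<in> ball w (cmod (z - w))"
  shows "u \<zeta> * (z - \<zeta>) powi g * ch c (\<lambda>i. cur n (r i)) i (sh a \<phi> z w) \<zeta> = lev N (Cs c Fs es g u i) z \<zeta>"
  using iN \<zeta>
proof (induction i arbitrary: \<zeta>)
  case 0
  have gN: "g \<in> {-int N..int N}" using g 0 by auto
  have "lev N (Cs c Fs es g u 0) z \<zeta> = (\<Sum>k\<in>{-int N..int N}. if k = g then u \<zeta> * (z - \<zeta>) powi g else 0)"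
    unfolding lev_def by (intro sum.cong refl) auto
  also have "\<dots> = u \<zeta> * (z - \<zeta>) powi g" using gN by simp
  finally show ?case by simp
next
  case (Suc i)
  define R where "R = (\<lambda>i. cur n (r i))"
  define \<psi> where "\<psi> = sh a \<phi> z w"
  define B where "B = ball w (cmod (z - w))"
  define C where "C = Cs c Fs es g u i"
  define W where "W = (\<lambda>x. u x * (z - x) powi g)"
  define A where "A = cur n a \<phi>"
  define Lv where "Lv = (\<lambda>x. lev N C z x)"
  have \<zeta>B: "\<zeta> \<in> B" using Suc.prems B_def by simp
  have z\<zeta>: "z \<noteq> \<zeta>" using ball_ne \<zeta>B B_def by blast
  have Wnz: "W x \<noteq> 0" if "x \<in> B" for x
    using ball_ne[of x w z] that unfolding W_def B_def u_def by auto
  have IH: "W x * ch c R i \<psi> x = Lv x" if "x \<in> B" for x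
    using Suc.IH[of x] Suc.prems that unfolding W_def R_def \<psi>_def Lv_def C_def B_def by simp
  have Hq: "ch c R i \<psi> x = Lv x / W x" if "x \<in> B" for x
    using IH[OF that] Wnz[OF that] by (simp add: field_simps)
  have suppC: "suppM (Suc i) C" unfolding C_def by (rule Cs_supp[OF g])
  have holoU: "u holomorphic_on UNIV" unfolding u_def
    by (intro holomorphic_intros) (use hol in auto)
  have holoF: "\<forall>i. Fs i holomorphic_on UNIV" unfolding Fs_def
    using cur_holo[OF hol] by (auto intro!: holomorphic_intros)
  have holC: "holoC C" unfolding C_def by (rule Cs_holo[OF holoU holoF])
  have dLv: "(Lv has_field_derivative lev N (lD C) z \<zeta>) (at \<zeta>)"
    unfolding Lv_def by (rule lev_deriv[OF suppC _ holC z\<zeta>]) (use Suc.prems in simp)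
  have du: "(u has_field_derivative - A \<zeta> * u \<zeta>) (at \<zeta>)"
    unfolding u_def A_def
    by (rule DERIV_cong[OF DERIV_chain2[OF DERIV_exp DERIV_minus[OF expsum_deriv[OF hol]]]]) simp
  have dp: "((\<lambda>x. (z - x) powi g) has_field_derivative of_int g * (z - \<zeta>) powi (g - 1) * (0 - 1)) (at \<zeta>)"
    by (rule DERIV_power_int[OF DERIV_diff[OF DERIV_const DERIV_ident]]) (use z\<zeta> in simp)
  have pg: "(z - \<zeta>) powi (g - 1) = (z - \<zeta>) powi g / (z - \<zeta>)"
    using z\<zeta> by (simp add: power_int_diff)
  have dW: "(W has_field_derivative - (A \<zeta> + of_int g / (z - \<zeta>)) * W \<zeta>) (at \<zeta>)"
    unfolding W_def
    by (rule DERIV_cong[OF DERIV_mult[OF du dp]]) (simp add: pg algebra_simps)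
  have dq: "((\<lambda>x. Lv x / W x) has_field_derivative
       (lev N (lD C) z \<zeta> * W \<zeta> - Lv \<zeta> * (- (A \<zeta> + of_int g / (z - \<zeta>)) * W \<zeta>)) / (W \<zeta> * W \<zeta>)) (at \<zeta>)"
    by (rule DERIV_divide[OF dLv dW Wnz[OF \<zeta>B]])
  have dH: "((\<lambda>x. ch c R i \<psi> x) has_field_derivative
       (lev N (lD C) z \<zeta> * W \<zeta> - Lv \<zeta> * (- (A \<zeta> + of_int g / (z - \<zeta>)) * W \<zeta>)) / (W \<zeta> * W \<zeta>)) (at \<zeta>)"
    by (rule has_field_derivative_transform_within_open[OF dq _ \<zeta>B]) (use Hq B_def in auto)
  have Ri: "R i \<psi> \<zeta> = cur n (r i) \<phi> \<zeta> - bf n (r i) a / (z - \<zeta>)"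
    unfolding R_def \<psi>_def by (rule cur_sh[OF hol \<zeta>B[unfolded B_def]])
  have "W \<zeta> * ch c R (Suc i) \<psi> \<zeta>
      = W \<zeta> * (c * ((lev N (lD C) z \<zeta> * W \<zeta> - Lv \<zeta> * (- (A \<zeta> + of_int g / (z - \<zeta>)) * W \<zeta>)) / (W \<zeta> * W \<zeta>))
          + R i \<psi> \<zeta> * (Lv \<zeta> / W \<zeta>))"
    using DERIV_imp_deriv[OF dH] Hq[OF \<zeta>B] by (simp add: dop_def)
  also have "\<dots> = c * lev N (lD C) z \<zeta> + Fs i \<zeta> * Lv \<zeta> + es i * (Lv \<zeta> / (z - \<zeta>))"
    unfolding Ri Fs_def es_def A_def using alg_step[OF Wnz[OF \<zeta>B], of "z - \<zeta>"] z\<zeta>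
    by simp
  also have "\<dots> = lev N (Cs c Fs es g u (Suc i)) z \<zeta>"
    unfolding Lv_def C_def using lev_lstep[OF suppC[unfolded C_def] _ z\<zeta>] Suc.prems by simp
  finally show ?case unfolding W_def R_def \<psi>_def by simp
qed


lemma residue_sum:
  assumes "finite S" "\<forall>k\<in>S. f k holomorphic_on UNIV - {w}"
  shows "residue (\<lambda>z. \<Sum>k\<in>S. f k z) w = (\<Sum>k\<in>S. residue (f k) w)"
  using assms
proof (induction S rule: finite_induct)
  case empty then show ?case by (simp add: residue_const)
next
  case (insert x F)
  have "residue (\<lambda>z. \<Sum>k\<in>insert x F. f k z) w = residue (\<lambda>z. f x z + (\<Sum>k\<in>F. f k z)) w"
    using insert by simp
  also have "\<dots> = residue (f x) w + residue (\<lambda>z. \<Sum>k\<in>F. f k z) w"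
    by (rule residue_add[of UNIV]) (use insert in \<open>auto intro!: holomorphic_intros\<close>)
  finally show ?case using insert by simp
qed

lemma residue_term:
  assumes "v holomorphic_on UNIV"
  shows "residue (\<lambda>z. C k w * (v z * (z - w) powi k)) w
     = (if k < 0 then C k w * (deriv ^^ nat (-k-1)) v w / fact (nat (-k-1)) else 0)"
proof (cases "k < 0")
  case True
  define j where "j = nat (-k-1)"
  have pk: "(z - w) powi k = 1 / (z - w) ^ Suc j" for z
    unfolding power_int_def j_def using True
    by (simp add: power_inverse divide_inverse Suc_nat_eq_nat_zadd1)
  have "residue (\<lambda>z. C k w * (v z * (z - w) powi k)) w = residue (\<lambda>z. C k w * (v z / (z - w) ^ Suc j)) w"
    unfolding pk by simp
  also have "\<dots> = C k w * residue (\<lambda>z. v z / (z - w) ^ Suc j) w"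
    by (rule residue_lmul[of UNIV]) (use assms in \<open>auto intro!: holomorphic_intros\<close>)
  also have "\<dots> = C k w * ((deriv ^^ j) v w / fact j)"
    using residue_holomorphic_over_power[OF open_UNIV UNIV_I assms] by simp
  finally show ?thesis using True unfolding j_def by simp
next
  case False
  then have "(\<lambda>z. C k w * (v z * (z - w) powi k)) = (\<lambda>z. C k w * (v z * (z - w) ^ nat k))"
    by (simp add: power_int_def)
  moreover have "residue (\<lambda>z. C k w * (v z * (z - w) ^ nat k)) w = 0"
    by (rule residue_holo[of UNIV]) (use assms in \<open>auto intro!: holomorphic_intros\<close>)
  ultimately show ?thesis using False by simp
qed

lemma residue_lev:
  assumes "v holomorphic_on UNIV"
  shows "residue (\<lambda>z. v z * lev N C z w) w = resF N v C w"
proof -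
  have "residue (\<lambda>z. v z * lev N C z w) w = residue (\<lambda>z. \<Sum>k\<in>{-int N..int N}. C k w * (v z * (z - w) powi k)) w"
    unfolding lev_def by (simp add: sum_distrib_left algebra_simps)
  also have "\<dots> = (\<Sum>k\<in>{-int N..int N}. residue (\<lambda>z. C k w * (v z * (z - w) powi k)) w)"
    by (rule residue_sum) (use assms in \<open>auto intro!: holomorphic_intros\<close>)
  also have "\<dots> = (\<Sum>k\<in>{-int N..int N}. if k < 0 then C k w * (deriv ^^ nat (-k-1)) v w / fact (nat (-k-1)) else 0)"
    using residue_term[OF assms] by simp
  also have "\<dots> = (\<Sum>k\<in>{-int N..-1}. if k < 0 then C k w * (deriv ^^ nat (-k-1)) v w / fact (nat (-k-1)) else 0)"
    by (rule sum.mono_neutral_right) auto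
  also have "\<dots> = (\<Sum>j<N. C (-(int j+1)) w * (deriv ^^ j) v w / fact j)"
    by (rule sum.reindex_bij_witness[of _ "\<lambda>j. -(int j+1)" "\<lambda>k. nat (-k-1)"]) auto
  finally show ?thesis unfolding resF_def .
qed


lemma scr_zero:
  fixes n :: nat and a :: "nat \<Rightarrow> complex" and r :: "nat \<Rightarrow> nat \<Rightarrow> complex" and c :: complex and g :: int
  assumes hol: "\<forall>i. \<phi> i holomorphic_on UNIV" and g: "\<bar>g\<bar> \<le> 1" and LN: "Suc L < N"
    and u_def: "u = (\<lambda>\<zeta>. exp (- (\<Sum>j\<le>n. a j * \<phi> j \<zeta>)))"
    and v_def: "v = (\<lambda>\<zeta>. exp (\<Sum>j\<le>n. a j * \<phi> j \<zeta>))"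
    and Fs_def: "Fs = (\<lambda>i \<zeta>. c * cur n a \<phi> \<zeta> + cur n (r i) \<phi> \<zeta>)"
    and es_def: "es = (\<lambda>i. c * of_int g - bf n (r i) a)"
    and pg: "of_int p * bf n a xi = of_int g"
    and res: "resF N v (Cs c Fs es g u L) w = 0"
  shows "scr_res n a xi (ch c (\<lambda>i. cur n (r i)) L) p \<phi> w = 0"
proof -
  define f where "f = (\<lambda>z. (z - w) powr (of_int p * bf n a xi)
                  * exp (\<Sum>i\<le>n. a i * (\<phi> i z - \<phi> i w))
                  * ch c (\<lambda>i. cur n (r i)) L (\<lambda>i \<zeta>. \<phi> i \<zeta> + a i * ln ((z - \<zeta>) / (z - w))) w)"
  have feq: "f z = v z * lev N (Cs c Fs es g u L) z w" if "z \<noteq> w" for z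
  proof -
    have wB: "w \<in> ball w (cmod (z - w))" using that by simp
    have key: "u w * (z - w) powi g * ch c (\<lambda>i. cur n (r i)) L (sh a \<phi> z w) w = lev N (Cs c Fs es g u L) z w"
      by (rule ch_sh[OF hol g LN u_def Fs_def es_def wB])
    have e1: "(z - w) powr (of_int p * bf n a xi) = (z - w) powi g"
      unfolding pg using that by (simp add: complex_powr_of_int)
    have e2: "exp (\<Sum>i\<le>n. a i * (\<phi> i z - \<phi> i w)) = v z * u w"
      unfolding u_def v_def by (simp add: right_diff_distrib sum_subtractf exp_diff exp_minus field_simps)
    show ?thesis unfolding f_def e1 e2 key[symmetric] sh_def by (simp add: algebra_simps)
  qed
  have "residue f w = residue (\<lambda>z. v z * lev N (Cs c Fs es g u L) z w) w"
    by (rule residue_cong) (auto simp: eventually_at_filter feq)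
  also have "\<dots> = resF N v (Cs c Fs es g u L) w"
    by (rule residue_lev) (unfold v_def, intro holomorphic_intros, use hol in auto)
  finally show ?thesis unfolding scr_res_def f_def using res by simp
qed


lemma v_deriv:
  assumes "\<forall>i. \<phi> i holomorphic_on UNIV"
  shows "deriv (\<lambda>\<zeta>. exp (\<Sum>j\<le>n. a j * \<phi> j \<zeta>)) x = cur n a \<phi> x * exp (\<Sum>j\<le>n. a j * \<phi> j x)"
  by (rule DERIV_imp_deriv, rule DERIV_cong[OF DERIV_chain2[OF DERIV_exp expsum_deriv[OF assms]]]) simp

lemma u_deriv:
  assumes "\<forall>i. \<phi> i holomorphic_on UNIV"
  shows "deriv (\<lambda>\<zeta>. exp (- (\<Sum>j\<le>n. a j * \<phi> j \<zeta>))) x = - cur n a \<phi> x * exp (- (\<Sum>j\<le>n. a j * \<phi> j x))"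
  by (rule DERIV_imp_deriv, rule DERIV_cong[OF DERIV_chain2[OF DERIV_exp DERIV_minus[OF expsum_deriv[OF assms]]]]) simp

lemma commutes_nonneg:
  fixes g :: int
  assumes "0 \<le> g" "g \<le> 1" "of_int p * bf n a xi = of_int g" "\<forall>i<L. bf n (r i) a = c * of_int g"
  shows "commutes n a xi (chain c (\<lambda>i. cur n (r i)) L) p"
  unfolding commutes_def chain_ch
proof (intro allI impI)
  fix \<phi> :: curve and w assume hol: "\<forall>i. \<phi> i holomorphic_on UNIV"
  define u where "u = (\<lambda>\<zeta>. exp (- (\<Sum>j\<le>n. a j * \<phi> j \<zeta>)))"
  define v where "v = (\<lambda>\<zeta>. exp (\<Sum>j\<le>n. a j * \<phi> j \<zeta>))"
  define Fs where "Fs = (\<lambda>i \<zeta>. c * cur n a \<phi> \<zeta> + cur n (r i) \<phi> \<zeta>)"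
  define es where "es = (\<lambda>i. c * of_int g - bf n (r i) a)"
  have "nonneg (Cs c Fs es g u L)"
    by (rule Cs_nonneg[where L=L]) (use assms in \<open>auto simp: es_def\<close>)
  then have R: "resF (L+2) v (Cs c Fs es g u L) w = 0" by (rule resF_nonneg)
  show "scr_res n a xi (ch c (\<lambda>i. cur n (r i)) L) p \<phi> w = 0"
    by (rule scr_zero[OF hol _ _ u_def v_def Fs_def es_def _ R]) (use assms in auto)
qed

lemma commutes_T2:
  assumes "of_int p * bf n a xi = -1" "1 \<le> L" "bf n (r 0) a = 1"
    "\<forall>i. 1 \<le> i \<and> i < L \<longrightarrow> bf n (r i) a = - c" "\<forall>j\<le>n. r 0 j = a j"
  shows "commutes n a xi (chain c (\<lambda>i. cur n (r i)) L) p"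
  unfolding commutes_def chain_ch
proof (intro allI impI)
  fix \<phi> :: curve and w assume hol: "\<forall>i. \<phi> i holomorphic_on UNIV"
  define u where "u = (\<lambda>\<zeta>. exp (- (\<Sum>j\<le>n. a j * \<phi> j \<zeta>)))"
  define v where "v = (\<lambda>\<zeta>. exp (\<Sum>j\<le>n. a j * \<phi> j \<zeta>))"
  define Fs where "Fs = (\<lambda>i \<zeta>. c * cur n a \<phi> \<zeta> + cur n (r i) \<phi> \<zeta>)"
  define es where "es = (\<lambda>i. c * of_int (-1) - bf n (r i) a)"
  have cr: "cur n (r 0) \<phi> = cur n a \<phi>" unfolding cur_def using assms(5) by simp
  have holoU: "u holomorphic_on UNIV" unfolding u_def
    by (intro holomorphic_intros) (use hol in auto)
  have holoV: "v holomorphic_on UNIV" unfolding v_def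
    by (intro holomorphic_intros) (use hol in auto)
  have holoF: "\<forall>i. Fs i holomorphic_on UNIV" unfolding Fs_def
    using cur_holo[OF hol] by (auto intro!: holomorphic_intros)
  have R: "resF (L+2) v (Cs c Fs es (-1) u L) w = 0"
  proof (rule resF_T2[OF holoU holoV holoF])
    show "\<forall>x. deriv u x = - cur n a \<phi> x * u x" unfolding u_def using u_deriv[OF hol] by simp
    show "\<forall>x. deriv v x = cur n a \<phi> x * v x" unfolding v_def using v_deriv[OF hol] by simp
    show "Fs 0 = (\<lambda>x. c * cur n a \<phi> x + cur n a \<phi> x)" unfolding Fs_def cr by simp
    show "es 0 = - (c + 1)" unfolding es_def using assms(3) by simp
    show "\<forall>i. 1 \<le> i \<and> i < L \<longrightarrow> es i = 0" unfolding es_def using assms(4) by simp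
  qed (use assms in auto)
  show "scr_res n a xi (ch c (\<lambda>i. cur n (r i)) L) p \<phi> w = 0"
    by (rule scr_zero[OF hol _ _ u_def v_def Fs_def es_def _ R]) (use assms in auto)
qed

lemma commutes_T3:
  assumes "of_int p * bf n a xi = 0" "Suc jm < L" "bf n (r jm) a = - (c + 1)" "bf n (r (Suc jm)) a = c + 1"
    "\<forall>i. i < L \<and> i \<noteq> jm \<and> i \<noteq> Suc jm \<longrightarrow> bf n (r i) a = 0"
    "\<forall>j\<le>n. r (Suc jm) j - r jm j = a j"
  shows "commutes n a xi (chain c (\<lambda>i. cur n (r i)) L) p"
  unfolding commutes_def chain_ch
proof (intro allI impI)
  fix \<phi> :: curve and w assume hol: "\<forall>i. \<phi> i holomorphic_on UNIV"
  define u where "u = (\<lambda>\<zeta>. exp (- (\<Sum>j\<le>n. a j * \<phi> j \<zeta>)))"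
  define v where "v = (\<lambda>\<zeta>. exp (\<Sum>j\<le>n. a j * \<phi> j \<zeta>))"
  define Fs where "Fs = (\<lambda>i \<zeta>. c * cur n a \<phi> \<zeta> + cur n (r i) \<phi> \<zeta>)"
  define es where "es = (\<lambda>i. c * of_int 0 - bf n (r i) a)"
  have cr: "cur n (r (Suc jm)) \<phi> x - cur n (r jm) \<phi> x = cur n a \<phi> x" for x
    unfolding cur_def using assms(6) by (simp add: sum_subtractf[symmetric] algebra_simps)
  have holoU: "u holomorphic_on UNIV" unfolding u_def
    by (intro holomorphic_intros) (use hol in auto)
  have holoV: "v holomorphic_on UNIV" unfolding v_def
    by (intro holomorphic_intros) (use hol in auto)
  have holoF: "\<forall>i. Fs i holomorphic_on UNIV" unfolding Fs_def
    using cur_holo[OF hol] by (auto intro!: holomorphic_intros)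
  have R: "resF (L+2) v (Cs c Fs es 0 u L) w = 0"
  proof (rule resF_T3[OF holoU holoV holoF])
    show "\<forall>x. deriv v x = cur n a \<phi> x * v x" unfolding v_def using v_deriv[OF hol] by simp
    show "\<forall>x. Fs (Suc jm) x - Fs jm x = cur n a \<phi> x" unfolding Fs_def using cr by (simp add: algebra_simps)
    show "es jm = c + 1" unfolding es_def using assms(3) by simp
    show "es (Suc jm) = - (c + 1)" unfolding es_def using assms(4) by simp
    show "\<forall>i. i < L \<and> i \<noteq> jm \<and> i \<noteq> Suc jm \<longrightarrow> es i = 0" unfolding es_def using assms(5) by simp
  qed (use assms in auto)
  show "scr_res n a xi (ch c (\<lambda>i. cur n (r i)) L) p \<phi> w = 0"
    by (rule scr_zero[OF hol _ _ u_def v_def Fs_def es_def _ R]) (use assms in auto)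
qed


lemma bf_sym: "bf n x y = bf n y x"
  unfolding bf_def by (simp add: mult.commute)

lemma bf_Rvec_Suc: "bf n (Rvec psi A (Suc i)) x = bf n (Rvec psi A i) x + bf n (A (Suc i)) x"
  unfolding bf_def Rvec_def by (simp add: sum.distrib algebra_simps)

lemma bf_Rvec_0: "bf n (Rvec psi A 0) x = bf n psi x"
  unfolding bf_def Rvec_def by simp

lemma Rvec_0: "Rvec psi A 0 = psi"
  unfolding Rvec_def by simp

lemma Rvec_Suc_diff: "Rvec psi A (Suc i) j - Rvec psi A i j = A (Suc i) j"
  unfolding Rvec_def by simp

lemma beta_const:
  assumes "\<forall>i. Suc i < L \<longrightarrow> \<beta> (Suc i) = \<beta> i + b (Suc i)" "\<forall>l. 1 \<le> l \<and> l < L \<longrightarrow> b l = 0"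
    "0 < L \<longrightarrow> \<beta> 0 = x"
  shows "\<forall>i<L. \<beta> i = (x::complex)"
proof (intro allI impI)
  fix i show "i < L \<Longrightarrow> \<beta> i = x"
    by (induction i) (use assms in auto)
qed

lemma beta_T2:
  assumes "\<forall>i. Suc i < L \<longrightarrow> \<beta> (Suc i) = \<beta> i + b (Suc i)"
    "\<forall>l. 1 \<le> l \<and> l < L \<longrightarrow> b l = (if l = 1 then - K else 0)"
    "0 < L \<longrightarrow> \<beta> 0 = 1"
  shows "\<forall>i<L. \<beta> i = (if i = 0 then 1 else 1 - (K::complex))"
proof (intro allI impI)
  fix i show "i < L \<Longrightarrow> \<beta> i = (if i = 0 then 1 else 1 - K)"
  proof (induction i)
    case 0 then show ?case using assms by auto
  next
    case (Suc i) then show ?case using assms(1)[rule_format, of i] assms(2)[rule_format, of "Suc i"] by auto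
  qed
qed

lemma beta_T3:
  assumes "\<forall>i. Suc i < L \<longrightarrow> \<beta> (Suc i) = \<beta> i + b (Suc i)"
    "\<forall>l. 1 \<le> l \<and> l < L \<longrightarrow> b l = (if l = jj then 2 * K else if l + 1 = jj \<or> l = jj + 1 then - K else 0)"
    "0 < L \<longrightarrow> \<beta> 0 = (if jj = 1 then - K else 0)" "1 \<le> jj"
  shows "\<forall>i<L. \<beta> i = (if Suc i = jj then - K else if i = jj then (K::complex) else 0)"
proof (intro allI impI)
  fix i show "i < L \<Longrightarrow> \<beta> i = (if Suc i = jj then - K else if i = jj then K else 0)"
  proof (induction i)
    case 0 then show ?case using assms by auto
  next
    case (Suc i) then show ?case using assms(1)[rule_format, of i] assms(2)[rule_format, of "Suc i"] by auto
  qed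
qed


lemma E_part:
  assumes real: "realization n m K aP aM psiP psiM xi" and pres: "present n m l" and nX: "l \<noteq> VXi"
    and cK: "c = K - 1"
  shows "commutes n (vec aP aM psiP psiM xi l) xi (chain c (\<lambda>i. cur n (Rvec psiM aM i)) m) 1"
proof -
  let ?V = "vec aP aM psiP psiM xi"
  have G: "bf n (?V l1) (?V l2) = gram K l1 l2" if "present n m l1" "present n m l2" for l1 l2
    using real that unfolding realization_def by blast
  have vP: "?V (VA (int j)) = aP j" if "1 \<le> j" for j using that by simp
  have vM: "?V (VA (- int j)) = aM j" if "1 \<le> j" for j using that by simp
  have presM: "present n m (VA (- int j))" if "1 \<le> j" "j < m" for j using that by auto
  have rec: "\<forall>i. Suc i < m \<longrightarrow> bf n (Rvec psiM aM (Suc i)) x = bf n (Rvec psiM aM i) x + bf n (aM (Suc i)) x" for x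
    by (simp add: bf_Rvec_Suc)
  have bM: "bf n (aM j) (?V lb) = gram K (VA (- int j)) lb" if "1 \<le> j" "j < m" "present n m lb" for j lb
    using G[OF presM[OF that(1,2)] that(3)] vM[OF that(1)] by simp
  have b0: "bf n psiM (?V lb) = gram K VPm lb" if "1 \<le> m" "present n m lb" for lb
    using G[of VPm lb] that by simp
  have presX: "present n m VXi" by simp
  show ?thesis
  proof (cases l)
    case (VA j)
    show ?thesis
    proof (cases "0 < j")
      case True
      define jj where "jj = nat j"
      have jj: "j = int jj" "1 \<le> jj" using True unfolding jj_def by auto
      have a: "?V l = aP jj" using VA jj vP by simp
      have "\<forall>i<m. bf n (Rvec psiM aM i) (aP jj) = 0"
      proof (rule beta_const[OF rec])
        show "\<forall>l. 1 \<le> l \<and> l < m \<longrightarrow> bf n (aM l) (aP jj) = 0"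
          using bM[of _ l] pres a VA jj by auto
        show "0 < m \<longrightarrow> bf n (Rvec psiM aM 0) (aP jj) = 0"
          using b0[of l] pres a VA jj by (auto simp: bf_Rvec_0)
      qed
      moreover have "of_int 1 * bf n (aP jj) xi = of_int 0"
        using G[OF pres presX] a VA by simp
      ultimately show ?thesis unfolding a
        by (intro commutes_nonneg[where g=0]) auto
    next
      case False
      then have "j < 0" using pres VA by (cases "j = 0") auto
      define jj where "jj = nat (- j)"
      have jj: "j = - int jj" "1 \<le> jj" using \<open>j < 0\<close> unfolding jj_def by auto
      have jjm: "jj < m" using pres VA jj by auto
      have a: "?V l = aM jj" using VA jj vM by simp
      define jm where "jm = jj - 1"
      have jmjj: "Suc jm = jj" using jj unfolding jm_def by simp
      have B: "\<forall>i<m. bf n (Rvec psiM aM i) (aM jj) = (if Suc i = jj then - K else if i = jj then K else 0)"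
      proof (rule beta_T3[OF rec _ _ jj(2)])
        show "\<forall>l. 1 \<le> l \<and> l < m \<longrightarrow> bf n (aM l) (aM jj) = (if l = jj then 2 * K else if l + 1 = jj \<or> l = jj + 1 then - K else 0)"
        proof (intro allI impI)
          fix l assume l: "1 \<le> l \<and> l < m"
          have "bf n (aM l) (aM jj) = gram K (VA (- int l)) (VA (- int jj))"
            using bM[of l "VA (- int jj)"] l pres VA jj a by simp
          also have "\<dots> = (if l = jj then 2 * K else if l + 1 = jj \<or> l = jj + 1 then - K else 0)"
            using l jj by auto
          finally show "bf n (aM l) (aM jj) = (if l = jj then 2 * K else if l + 1 = jj \<or> l = jj + 1 then - K else 0)" .
        qed
        show "0 < m \<longrightarrow> bf n (Rvec psiM aM 0) (aM jj) = (if jj = 1 then - K else 0)"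
          using b0[of l] pres a VA jj by (auto simp: bf_Rvec_0)
      qed
      have "commutes n (aM jj) xi (chain c (\<lambda>i. cur n (Rvec psiM aM i)) m) 1"
      proof (rule commutes_T3[where jm=jm])
        show "of_int 1 * bf n (aM jj) xi = 0" using G[OF pres presX] a VA jj by simp
        show "Suc jm < m" using jmjj jjm by simp
        show "bf n (Rvec psiM aM jm) (aM jj) = - (c + 1)" using B jmjj jjm cK by auto
        show "bf n (Rvec psiM aM (Suc jm)) (aM jj) = c + 1" using B jmjj jjm cK by auto
        show "\<forall>i. i < m \<and> i \<noteq> jm \<and> i \<noteq> Suc jm \<longrightarrow> bf n (Rvec psiM aM i) (aM jj) = 0"
          using B jmjj by auto
        show "\<forall>j\<le>n. Rvec psiM aM (Suc jm) j - Rvec psiM aM jm j = aM jj j"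
          using jmjj Rvec_Suc_diff by metis
      qed
      then show ?thesis unfolding a .
    qed
  next
    case VPp
    then have a: "?V l = psiP" by simp
    have "\<forall>i<m. bf n (Rvec psiM aM i) psiP = K - 1"
    proof (rule beta_const[OF rec])
      show "\<forall>l. 1 \<le> l \<and> l < m \<longrightarrow> bf n (aM l) psiP = 0"
        using bM[of _ VPp] pres VPp by auto
      show "0 < m \<longrightarrow> bf n (Rvec psiM aM 0) psiP = K - 1"
        using b0[of VPp] pres VPp by (auto simp: bf_Rvec_0)
    qed
    moreover have "of_int 1 * bf n psiP xi = of_int 1"
      using G[OF pres presX] VPp by simp
    ultimately show ?thesis unfolding a using cK
      by (intro commutes_nonneg[where g=1]) auto
  next
    case VPm
    then have a: "?V l = psiM" by simp
    have m1: "1 \<le> m" using pres VPm by simp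
    have B: "\<forall>i<m. bf n (Rvec psiM aM i) psiM = (if i = 0 then 1 else 1 - K)"
    proof (rule beta_T2[OF rec])
      show "\<forall>l. 1 \<le> l \<and> l < m \<longrightarrow> bf n (aM l) psiM = (if l = 1 then - K else 0)"
        using bM[of _ VPm] pres VPm by auto
      show "0 < m \<longrightarrow> bf n (Rvec psiM aM 0) psiM = 1"
        using b0[of VPm] pres VPm by (auto simp: bf_Rvec_0)
    qed
    have "commutes n psiM xi (chain c (\<lambda>i. cur n (Rvec psiM aM i)) m) 1"
    proof (rule commutes_T2)
      show "of_int 1 * bf n psiM xi = -1" using G[OF pres presX] VPm by simp
      show "1 \<le> m" by (rule m1)
      show "bf n (Rvec psiM aM 0) psiM = 1" using B m1 by auto
      show "\<forall>i. 1 \<le> i \<and> i < m \<longrightarrow> bf n (Rvec psiM aM i) psiM = - c" using B cK by auto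
      show "\<forall>j\<le>n. Rvec psiM aM 0 j = psiM j" by (simp add: Rvec_0)
    qed
    then show ?thesis unfolding a .
  next
    case VXi then show ?thesis using nX by simp
  qed
qed


lemma F_part:
  assumes real: "realization n m K aP aM psiP psiM xi" and pres: "present n m l" and nX: "l \<noteq> VXi"
    and cK: "c = K - 1" and n2: "2 \<le> n"
  shows "commutes n (vec aP aM psiP psiM xi l) xi (chain c (\<lambda>i. cur n (Rvec psiP aP i)) (n - m)) (-1)"
proof -
  let ?V = "vec aP aM psiP psiM xi"
  let ?L = "n - m"
  have G: "bf n (?V l1) (?V l2) = gram K l1 l2" if "present n m l1" "present n m l2" for l1 l2
    using real that unfolding realization_def by blast
  have vP: "?V (VA (int j)) = aP j" if "1 \<le> j" for j using that by simp
  have vM: "?V (VA (- int j)) = aM j" if "1 \<le> j" for j using that by simp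
  have presP: "present n m (VA (int j))" if "1 \<le> j" "j < ?L" for j using that by auto
  have rec: "\<forall>i. Suc i < ?L \<longrightarrow> bf n (Rvec psiP aP (Suc i)) x = bf n (Rvec psiP aP i) x + bf n (aP (Suc i)) x" for x
    by (simp add: bf_Rvec_Suc)
  have bP: "bf n (aP j) (?V lb) = gram K (VA (int j)) lb" if "1 \<le> j" "j < ?L" "present n m lb" for j lb
    using G[OF presP[OF that(1,2)] that(3)] vP[OF that(1)] by simp
  have b0: "bf n psiP (?V lb) = gram K VPp lb" if "0 < ?L" "present n m lb" for lb
    using G[of VPp lb] that by simp
  have presX: "present n m VXi" by simp
  show ?thesis
  proof (cases l)
    case (VA j)
    show ?thesis
    proof (cases "0 < j")
      case True
      define jj where "jj = nat j"
      have jj: "j = int jj" "1 \<le> jj" using True unfolding jj_def by auto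
      have jjL: "jj < ?L" using pres VA jj by auto
      have a: "?V l = aP jj" using VA jj vP by simp
      define jm where "jm = jj - 1"
      have jmjj: "Suc jm = jj" using jj unfolding jm_def by simp
      have B: "\<forall>i<?L. bf n (Rvec psiP aP i) (aP jj) = (if Suc i = jj then - K else if i = jj then K else 0)"
      proof (rule beta_T3[OF rec _ _ jj(2)])
        show "\<forall>l. 1 \<le> l \<and> l < ?L \<longrightarrow> bf n (aP l) (aP jj) = (if l = jj then 2 * K else if l + 1 = jj \<or> l = jj + 1 then - K else 0)"
        proof (intro allI impI)
          fix l assume l: "1 \<le> l \<and> l < ?L"
          have "bf n (aP l) (aP jj) = gram K (VA (int l)) (VA (int jj))"
            using bP[of l "VA (int jj)"] l pres VA jj a by simp
          also have "\<dots> = (if l = jj then 2 * K else if l + 1 = jj \<or> l = jj + 1 then - K else 0)"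
            using l jj by auto
          finally show "bf n (aP l) (aP jj) = (if l = jj then 2 * K else if l + 1 = jj \<or> l = jj + 1 then - K else 0)" .
        qed
        show "0 < ?L \<longrightarrow> bf n (Rvec psiP aP 0) (aP jj) = (if jj = 1 then - K else 0)"
          using b0[of l] pres a VA jj by (auto simp: bf_Rvec_0)
      qed
      have "commutes n (aP jj) xi (chain c (\<lambda>i. cur n (Rvec psiP aP i)) ?L) (-1)"
      proof (rule commutes_T3[where jm=jm])
        show "of_int (-1) * bf n (aP jj) xi = 0" using G[OF pres presX] a VA jj by simp
        show "Suc jm < ?L" using jmjj jjL by simp
        show "bf n (Rvec psiP aP jm) (aP jj) = - (c + 1)" using B jmjj jjL cK by auto
        show "bf n (Rvec psiP aP (Suc jm)) (aP jj) = c + 1" using B jmjj jjL cK by auto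
        show "\<forall>i. i < ?L \<and> i \<noteq> jm \<and> i \<noteq> Suc jm \<longrightarrow> bf n (Rvec psiP aP i) (aP jj) = 0"
          using B jmjj by auto
        show "\<forall>j\<le>n. Rvec psiP aP (Suc jm) j - Rvec psiP aP jm j = aP jj j"
          using jmjj Rvec_Suc_diff by metis
      qed
      then show ?thesis unfolding a .
    next
      case False
      then have "j < 0" using pres VA by (cases "j = 0") auto
      define jj where "jj = nat (- j)"
      have jj: "j = - int jj" "1 \<le> jj" using \<open>j < 0\<close> unfolding jj_def by auto
      have a: "?V l = aM jj" using VA jj vM by simp
      have "\<forall>i<?L. bf n (Rvec psiP aP i) (aM jj) = 0"
      proof (rule beta_const[OF rec])
        show "\<forall>l. 1 \<le> l \<and> l < ?L \<longrightarrow> bf n (aP l) (aM jj) = 0"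
          using bP[of _ l] pres a VA jj by auto
        show "0 < ?L \<longrightarrow> bf n (Rvec psiP aP 0) (aM jj) = 0"
          using b0[of l] pres a VA jj by (auto simp: bf_Rvec_0)
      qed
      moreover have "of_int (-1) * bf n (aM jj) xi = of_int 0"
        using G[OF pres presX] a VA jj by simp
      ultimately show ?thesis unfolding a
        by (intro commutes_nonneg[where g=0]) auto
    qed
  next
    case VPp
    then have a: "?V l = psiP" by simp
    have L1: "1 \<le> ?L" using pres VPp n2 by simp
    have B: "\<forall>i<?L. bf n (Rvec psiP aP i) psiP = (if i = 0 then 1 else 1 - K)"
    proof (rule beta_T2[OF rec])
      show "\<forall>l. 1 \<le> l \<and> l < ?L \<longrightarrow> bf n (aP l) psiP = (if l = 1 then - K else 0)"
        using bP[of _ VPp] pres VPp by auto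
      show "0 < ?L \<longrightarrow> bf n (Rvec psiP aP 0) psiP = 1"
        using b0[of VPp] pres VPp by (auto simp: bf_Rvec_0)
    qed
    have "commutes n psiP xi (chain c (\<lambda>i. cur n (Rvec psiP aP i)) ?L) (-1)"
    proof (rule commutes_T2)
      show "of_int (-1) * bf n psiP xi = -1" using G[OF pres presX] VPp by simp
      show "1 \<le> ?L" by (rule L1)
      show "bf n (Rvec psiP aP 0) psiP = 1" using B L1 by auto
      show "\<forall>i. 1 \<le> i \<and> i < ?L \<longrightarrow> bf n (Rvec psiP aP i) psiP = - c" using B cK by auto
      show "\<forall>j\<le>n. Rvec psiP aP 0 j = psiP j" by (simp add: Rvec_0)
    qed
    then show ?thesis unfolding a .
  next
    case VPm
    then have a: "?V l = psiM" by simp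
    have "\<forall>i<?L. bf n (Rvec psiP aP i) psiM = K - 1"
    proof (rule beta_const[OF rec])
      show "\<forall>l. 1 \<le> l \<and> l < ?L \<longrightarrow> bf n (aP l) psiM = 0"
        using bP[of _ VPm] pres VPm by auto
      show "0 < ?L \<longrightarrow> bf n (Rvec psiP aP 0) psiM = K - 1"
        using b0[of VPm] pres VPm by (auto simp: bf_Rvec_0)
    qed
    moreover have "of_int (-1) * bf n psiM xi = of_int 1"
      using G[OF pres presX] VPm by simp
    ultimately show ?thesis unfolding a using cK
      by (intro commutes_nonneg[where g=1]) auto
  next
    case VXi then show ?thesis using nX by simp
  qed
qed


theorem theorem1p1:
  fixes n m :: nat
  assumes "2 \<le> n" and "m \<le> n"
  shows "\<exists>S :: complex set. finite S \<and>
    (\<forall>k. k \<notin> S \<longrightarrow>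
      (\<forall>aP aM psiP psiM xi.
         realization n m (k + of_nat n) aP aM psiP psiM xi \<longrightarrow>
         (let E = chain (k + of_nat n - 1) (\<lambda>i. cur n (Rvec psiM aM i)) m;
              F = chain (k + of_nat n - 1) (\<lambda>i. cur n (Rvec psiP aP i)) (n - m)
          in \<forall>l. present n m l \<and> l \<noteq> VXi \<longrightarrow>
                commutes n (vec aP aM psiP psiM xi l) xi E 1 \<and>
                commutes n (vec aP aM psiP psiM xi l) xi F (-1))))"
proof -
  have main: "\<forall>aP aM psiP psiM xi.
         realization n m (k + of_nat n) aP aM psiP psiM xi \<longrightarrow>
         (let E = chain (k + of_nat n - 1) (\<lambda>i. cur n (Rvec psiM aM i)) m;
              F = chain (k + of_nat n - 1) (\<lambda>i. cur n (Rvec psiP aP i)) (n - m)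
          in \<forall>l. present n m l \<and> l \<noteq> VXi \<longrightarrow>
                commutes n (vec aP aM psiP psiM xi l) xi E 1 \<and>
                commutes n (vec aP aM psiP psiM xi l) xi F (-1))" for k :: complex
  proof (intro allI impI)
    fix aP aM psiP psiM xi
    assume real: "realization n m (k + of_nat n) aP aM psiP psiM xi"
    show "let E = chain (k + of_nat n - 1) (\<lambda>i. cur n (Rvec psiM aM i)) m;
              F = chain (k + of_nat n - 1) (\<lambda>i. cur n (Rvec psiP aP i)) (n - m)
          in \<forall>l. present n m l \<and> l \<noteq> VXi \<longrightarrow>
                commutes n (vec aP aM psiP psiM xi l) xi E 1 \<and>
                commutes n (vec aP aM psiP psiM xi l) xi F (-1)"
      unfolding Let_def
    proof (intro allI impI conjI)
      fix l assume l: "present n m l \<and> l \<noteq> VXi"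
      show "commutes n (vec aP aM psiP psiM xi l) xi (chain (k + of_nat n - 1) (\<lambda>i. cur n (Rvec psiM aM i)) m) 1"
        using E_part[OF real _ _ refl] l by blast
      show "commutes n (vec aP aM psiP psiM xi l) xi (chain (k + of_nat n - 1) (\<lambda>i. cur n (Rvec psiP aP i)) (n - m)) (-1)"
        using F_part[OF real _ _ refl assms(1)] l by blast
    qed
  qed
  show ?thesis by (intro exI[of _ "{}"]) (use main in auto)
qed

end
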